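(* Let $g:[0,1]\to[0,\infty)$, let $G_0(X^n,P)=\sum_{x\in\mathcal{X}}g(p_x)\,I(F_x(X^n)=0)$ and $L_{G_0}(\lambda)=\log E\big[e^{\lambda(G_0-E[G_0])}\big]$. Then for all $\lambda>0$, $$L_{G_0}(\lambda)\le\sum_{r=2}^{\infty}\frac{\lambda^r}{r!}\,u^*_r(n,g),\qquad u^*_r(n,g)=\max_{0<p<1}g(p)^r(1-p)^n\frac{1-(1-p)^n}{p}.$$
   Context: $P$ is a discrete probability distribution on a countable alphabet $\mathcal{X}$, $p_x=P(x)$, and $X^n=(X_1,\ldots,X_n)$ are i.i.d. samples from $P$. $F_x(X^n)=\sum_{i=1}^n I(X_i=x)$ is the number of occurrences of $x$ in $X^n$, and $I(\cdot)$ is the indicator. *)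

theory Defs
  imports "HOL-Probability.Probability"
begin

definition occ :: "'a \<Rightarrow> 'a list \<Rightarrow> nat" where
  "occ x xs = count_list xs x"

definition G0 :: "(real \<Rightarrow> real) \<Rightarrow> 'a pmf \<Rightarrow> 'a list \<Rightarrow> real" where
  "G0 g P xs = (\<Sum>\<^sub>\<infinity>x\<in>set_pmf P. g (pmf P x) * (if occ x xs = 0 then 1 else 0))"

definition L_G0 :: "(real \<Rightarrow> real) \<Rightarrow> 'a pmf \<Rightarrow> nat \<Rightarrow> real \<Rightarrow> real" where
  "L_G0 g P n lam = ln (measure_pmf.expectation (replicate_pmf n P)
      (\<lambda>xs. exp (lam * (G0 g P xs - measure_pmf.expectation (replicate_pmf n P) (G0 g P)))))"

definition u_star :: "nat \<Rightarrow> nat \<Rightarrow> (real \<Rightarrow> real) \<Rightarrow> ereal" where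
  "u_star r n g = (SUP p\<in>{0<..<1::real}. ereal (g p ^ r * (1 - p) ^ n * (1 - (1 - p) ^ n) / p))"

end

theory Submission
  imports Defs
begin
lemma rep_emeasure:
  "emeasure (measure_pmf (replicate_pmf n P)) {xs. set xs \<inter> B = {}} = (emeasure (measure_pmf P) (- B)) ^ n"
proof (induction n)
  case 0
  then show ?case by (simp add: emeasure_return_pmf indicator_def)
next
  case (Suc n)
  have "emeasure (measure_pmf (replicate_pmf (Suc n) P)) {xs. set xs \<inter> B = {}}
     = (\<integral>\<^sup>+x. (\<integral>\<^sup>+xs. indicator (-B) x * indicator {xs. set xs \<inter> B = {}} xs \<partial>measure_pmf (replicate_pmf n P)) \<partial>measure_pmf P)"
    by (simp add: indicator_def of_bool_def; intro nn_integral_cong; simp)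
  also have "\<dots> = (\<integral>\<^sup>+x. indicator (-B) x * emeasure (measure_pmf (replicate_pmf n P)) {xs. set xs \<inter> B = {}} \<partial>measure_pmf P)"
    by (subst nn_integral_cmult) auto
  also have "\<dots> = emeasure (measure_pmf P) (- B) * emeasure (measure_pmf (replicate_pmf n P)) {xs. set xs \<inter> B = {}}"
    by (subst nn_integral_multc) auto
  finally show ?case using Suc by simp
qed
lemma rep_prob:
  "measure_pmf.prob (replicate_pmf n P) {xs. set xs \<inter> B = {}} = (1 - measure_pmf.prob P B) ^ n"
proof -
  have "ennreal (measure_pmf.prob (replicate_pmf n P) {xs. set xs \<inter> B = {}}) = ennreal ((measure_pmf.prob P (- B)) ^ n)"
    using rep_emeasure[of n P B] by (simp add: measure_pmf.emeasure_eq_measure ennreal_power)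
  then have "measure_pmf.prob (replicate_pmf n P) {xs. set xs \<inter> B = {}} = (measure_pmf.prob P (- B)) ^ n"
    by (subst (asm) ennreal_inj) auto
  moreover have "measure_pmf.prob P (- B) = 1 - measure_pmf.prob P B"
    using measure_pmf.prob_compl[of B P] by (simp add: Compl_eq_Diff_UNIV)
  ultimately show ?thesis by simp
qed

lemma weier:
  fixes p :: "'a \<Rightarrow> real"
  assumes "finite X" "\<And>x. x \<in> X \<Longrightarrow> 0 \<le> p x \<and> p x \<le> 1"
  shows "1 - sum p X \<le> (\<Prod>x\<in>X. 1 - p x)"
  using assms
proof (induction X rule: finite_induct)
  case empty
  then show ?case by simp
next
  case (insert y F)
  have IH: "1 - sum p F \<le> (\<Prod>x\<in>F. 1 - p x)" using insert by auto
  have s0: "sum p F \<ge> 0" using insert by (auto intro: sum_nonneg)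
  have py: "0 \<le> p y" "p y \<le> 1" using insert by auto
  have "1 - sum p (insert y F) = 1 - p y - sum p F" using insert by simp
  also have "\<dots> \<le> (1 - p y) * (1 - sum p F)" using s0 py by (simp add: algebra_simps)
  also have "\<dots> \<le> (1 - p y) * (\<Prod>x\<in>F. 1 - p x)" using IH py by (intro mult_left_mono) auto
  also have "\<dots> = (\<Prod>x\<in>insert y F. 1 - p x)" using insert by simp
  finally show ?case .
qed

lemma key:
  fixes a :: "'a \<Rightarrow> real"
  assumes B: "finite B" and a: "\<And>x. x \<in> B \<Longrightarrow> a x \<ge> 0"
  shows "measure_pmf.expectation (replicate_pmf n P) (\<lambda>xs. \<Prod>x\<in>B. a x * (if x \<in> set xs then 0 else 1) + 1)
     \<le> (\<Prod>x\<in>B. a x * (1 - pmf P x) ^ n + 1)"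
proof -
  let ?M = "replicate_pmf n P"
  have eq1: "(\<Prod>x\<in>B. a x * (if x \<in> set xs then 0 else 1) + 1)
     = (\<Sum>X\<in>Pow B. prod a X * indicator {xs. set xs \<inter> X = {}} xs)" for xs
  proof -
    have "(\<Prod>x\<in>B. a x * (if x \<in> set xs then 0 else 1) + 1)
       = (\<Sum>X\<in>Pow B. (\<Prod>x\<in>X. a x * (if x \<in> set xs then 0 else 1)) * (\<Prod>x\<in>B-X. 1))"
      by (rule prod_add[OF B])
    also have "\<dots> = (\<Sum>X\<in>Pow B. prod a X * indicator {xs. set xs \<inter> X = {}} xs)"
    proof (intro sum.cong refl)
      fix X assume "X \<in> Pow B"
      then have fX: "finite X" using B finite_subset by auto
      show "(\<Prod>x\<in>X. a x * (if x \<in> set xs then 0 else 1)) * (\<Prod>x\<in>B-X. 1) = prod a X * indicator {xs. set xs \<inter> X = {}} xs"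
      proof -
        have "(\<Prod>x\<in>X. (if x \<in> set xs then 0 else 1::real)) = indicator {xs. set xs \<inter> X = {}} xs"
          using fX by (auto simp: indicator_def prod_zero_iff intro!: prod.neutral)
        then show ?thesis by (simp add: prod.distrib)
      qed
    qed
    finally show ?thesis .
  qed
  have "measure_pmf.expectation ?M (\<lambda>xs. \<Prod>x\<in>B. a x * (if x \<in> set xs then 0 else 1) + 1)
     = measure_pmf.expectation ?M (\<lambda>xs. \<Sum>X\<in>Pow B. prod a X * indicator {xs. set xs \<inter> X = {}} xs)"
    by (simp add: eq1)
  also have "\<dots> = (\<Sum>X\<in>Pow B. measure_pmf.expectation ?M (\<lambda>xs. prod a X * indicator {xs. set xs \<inter> X = {}} xs))"
    by (rule Bochner_Integration.integral_sum) (auto intro!: integrable_real_indicator simp: measure_pmf.emeasure_eq_measure)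
  also have "\<dots> = (\<Sum>X\<in>Pow B. prod a X * (1 - measure_pmf.prob P X) ^ n)"
    by (simp add: rep_prob)
  also have "\<dots> \<le> (\<Sum>X\<in>Pow B. prod a X * (\<Prod>x\<in>X. (1 - pmf P x) ^ n))"
  proof (intro sum_mono mult_left_mono)
    fix X assume "X \<in> Pow B"
    then have fX: "finite X" and XB: "X \<subseteq> B" using B finite_subset by auto
    show "0 \<le> prod a X" using a XB by (auto intro: prod_nonneg)
    have "measure_pmf.prob P X = sum (pmf P) X" using fX by (simp add: measure_measure_pmf_finite)
    then have "1 - measure_pmf.prob P X \<le> (\<Prod>x\<in>X. 1 - pmf P x)"
      using weier[OF fX, of "pmf P"] by (simp add: pmf_le_1)
    moreover have "0 \<le> 1 - measure_pmf.prob P X" by simp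
    ultimately show "(1 - measure_pmf.prob P X) ^ n \<le> (\<Prod>x\<in>X. (1 - pmf P x) ^ n)"
      by (simp add: prod_power_distrib[symmetric] power_mono)
  qed
  also have "\<dots> = (\<Sum>X\<in>Pow B. (\<Prod>x\<in>X. a x * (1 - pmf P x) ^ n) * (\<Prod>x\<in>B-X. 1))"
    by (simp add: prod.distrib)
  also have "\<dots> = (\<Prod>x\<in>B. a x * (1 - pmf P x) ^ n + 1)"
    by (rule prod_add[OF B, symmetric])
  finally show ?thesis .
qed
lemma bern_ineq:
  fixes t q :: real
  assumes t: "t \<ge> 0" and q: "0 \<le> q" "q \<le> 1"
  shows "ln ((exp t - 1) * q + 1) \<le> t * q + q * (1 - q) * (exp t - 1 - t)"
proof -
  define h where "h s = s * q + q * (1 - q) * (exp s - 1 - s) - ln ((exp s - 1) * q + 1)" for s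
  have D: "\<And>s. 0 \<le> s \<Longrightarrow> (exp s - 1) * q + 1 > 0"
  proof -
    fix s :: real assume "0 \<le> s"
    then have "exp s \<ge> 1" by simp
    then show "(exp s - 1) * q + 1 > 0" using q by (smt (verit) mult_nonneg_nonneg)
  qed
  have "h 0 \<le> h t"
  proof (rule DERIV_nonneg_imp_nondecreasing[OF t])
    fix s :: real assume s: "0 \<le> s" "s \<le> t"
    let ?d = "q + q * (1 - q) * (exp s - 1) - exp s * q / ((exp s - 1) * q + 1)"
    have "DERIV h s :> ?d"
      unfolding h_def using D[OF s(1)]
      by (auto intro!: derivative_eq_intros simp: field_simps)
    moreover have "?d \<ge> 0"
    proof -
      have Dp: "(exp s - 1) * q + 1 \<ge> 1" using s q by (simp add: mult_nonneg_nonneg)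
      have e1: "exp s - 1 \<ge> 0" using s by simp
      have "exp s * q / ((exp s - 1) * q + 1) - q = q * (1 - q) * (exp s - 1) / ((exp s - 1) * q + 1)"
        using D[OF s(1)] by (simp add: field_simps)
      also have "\<dots> \<le> q * (1 - q) * (exp s - 1)"
      proof -
        have X: "q * (1 - q) * (exp s - 1) \<ge> 0" using e1 q by (auto intro: mult_nonneg_nonneg)
        have "q * (1 - q) * (exp s - 1) / ((exp s - 1) * q + 1) \<le> q * (1 - q) * (exp s - 1) / 1"
          using Dp X by (intro divide_left_mono) auto
        then show ?thesis by simp
      qed
      finally show ?thesis by simp
    qed
    ultimately show "\<exists>y. DERIV h s :> y \<and> 0 \<le> y" by blast
  qed
  then show ?thesis by (simp add: h_def)
qed

lemma D_le_u:
  fixes g :: "real \<Rightarrow> real" and P :: "'a pmf"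
  assumes g_nonneg: "\<forall>p\<in>{0..1}. g p \<ge> 0" and B: "finite B" "B \<subseteq> set_pmf P"
  shows "ereal (\<Sum>x\<in>B. g (pmf P x) ^ k * ((1 - pmf P x) ^ n * (1 - (1 - pmf P x) ^ n))) \<le> u_star k n g"
proof (cases "u_star k n g = \<infinity>")
  case True then show ?thesis by simp
next
  case False
  let ?h = "\<lambda>p. g p ^ k * (1 - p) ^ n * (1 - (1 - p) ^ n) / p"
  have hu: "ereal (?h p) \<le> u_star k n g" if "p \<in> {0<..<1}" for p
    unfolding u_star_def using that by (rule SUP_upper2) simp
  have h0: "?h (1/2) \<ge> 0"
    using g_nonneg by (auto intro!: mult_nonneg_nonneg divide_nonneg_nonneg zero_le_power simp: power_le_one)
  have "0 \<le> ereal (?h (1/2))" using h0 by simp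
  also have "\<dots> \<le> u_star k n g" by (rule hu) auto
  finally have u0: "0 \<le> u_star k n g" .
  then obtain U where U: "u_star k n g = ereal U" using False by (cases "u_star k n g") auto
  with u0 have U0: "U \<ge> 0" by simp
  have each: "g (pmf P x) ^ k * ((1 - pmf P x) ^ n * (1 - (1 - pmf P x) ^ n)) \<le> pmf P x * U" if "x \<in> B" for x
  proof -
    have "pmf P x \<noteq> 0" using that B by (auto simp: set_pmf_iff)
    then have p0: "pmf P x > 0" by (simp add: pmf_nonneg less_le)
    have p1: "pmf P x \<le> 1" by (simp add: pmf_le_1)
    show ?thesis
    proof (cases "pmf P x = 1")
      case True
      then show ?thesis using U0 by (cases n) auto
    next
      case False
      with p0 p1 have "pmf P x \<in> {0<..<1}" by auto
      from hu[OF this] U have "?h (pmf P x) \<le> U" by simp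
      then have "pmf P x * ?h (pmf P x) \<le> pmf P x * U" using p0 by (intro mult_left_mono) auto
      moreover have "pmf P x * ?h (pmf P x) = g (pmf P x) ^ k * ((1 - pmf P x) ^ n * (1 - (1 - pmf P x) ^ n))"
        using p0 by simp
      ultimately show ?thesis by simp
    qed
  qed
  have "(\<Sum>x\<in>B. g (pmf P x) ^ k * ((1 - pmf P x) ^ n * (1 - (1 - pmf P x) ^ n))) \<le> (\<Sum>x\<in>B. pmf P x * U)"
    by (rule sum_mono) (rule each)
  also have "\<dots> = measure_pmf.prob P B * U" using B by (simp add: measure_measure_pmf_finite sum_distrib_right)
  also have "\<dots> \<le> 1 * U" using U0 by (intro mult_right_mono) auto
  finally show ?thesis using U by simp
qed

lemma series_bound:
  fixes g :: "real \<Rightarrow> real" and P :: "'a pmf"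
  assumes g_nonneg: "\<forall>p\<in>{0..1}. g p \<ge> 0" and B: "finite B" "B \<subseteq> set_pmf P" and lam: "lam > 0"
  shows "ereal (\<Sum>x\<in>B. ((1 - pmf P x) ^ n * (1 - (1 - pmf P x) ^ n)) * (exp (lam * g (pmf P x)) - 1 - lam * g (pmf P x)))
     \<le> (\<Sum>r. ereal (lam ^ (r + 2) / fact (r + 2)) * u_star (r + 2) n g)"
proof -
  define w where "w x = (1 - pmf P x) ^ n * (1 - (1 - pmf P x) ^ n)" for x
  define D where "D r = (\<Sum>x\<in>B. g (pmf P x) ^ (r + 2) * w x)" for r
  have ex: "(\<lambda>r. t ^ (r + 2) / fact (r + 2)) sums (exp t - 1 - t)" for t :: real
  proof -
    have "(\<lambda>r. t ^ r / fact r) sums exp t" using exp_converges[of t] by (simp add: divide_inverse_commute scaleR_conv_of_real)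
    then have "(\<lambda>r. t ^ (r + 2) / fact (r + 2)) sums (exp t - (\<Sum>i<2. t ^ i / fact i))"
      by (subst sums_iff_shift) simp
    then show ?thesis by (simp add: eval_nat_numeral diff_diff_eq)
  qed
  have "(\<lambda>r. \<Sum>x\<in>B. w x * ((lam * g (pmf P x)) ^ (r + 2) / fact (r + 2)))
      sums (\<Sum>x\<in>B. w x * (exp (lam * g (pmf P x)) - 1 - lam * g (pmf P x)))"
    by (intro sums_sum sums_mult ex)
  moreover have "(\<Sum>x\<in>B. w x * ((lam * g (pmf P x)) ^ (r + 2) / fact (r + 2))) = lam ^ (r + 2) / fact (r + 2) * D r" for r
    unfolding D_def by (simp add: sum_distrib_left power_mult_distrib sum_divide_distrib mult_ac)
  ultimately have S: "(\<lambda>r. lam ^ (r + 2) / fact (r + 2) * D r) sums (\<Sum>x\<in>B. w x * (exp (lam * g (pmf P x)) - 1 - lam * g (pmf P x)))"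
    by simp
  have "ereal (\<Sum>x\<in>B. w x * (exp (lam * g (pmf P x)) - 1 - lam * g (pmf P x))) = (\<Sum>r. ereal (lam ^ (r + 2) / fact (r + 2) * D r))"
    using S by (subst sums_unique[of "\<lambda>r. ereal (lam ^ (r + 2) / fact (r + 2) * D r)"]) (auto simp: sums_ereal)
  also have "\<dots> \<le> (\<Sum>r. ereal (lam ^ (r + 2) / fact (r + 2)) * u_star (r + 2) n g)"
  proof (rule suminf_le)
    have Dnn: "D r \<ge> 0" for r
      unfolding D_def w_def using g_nonneg
      by (intro sum_nonneg mult_nonneg_nonneg zero_le_power) (auto simp: pmf_le_1 power_le_one)
    show "summable (\<lambda>r. ereal (lam ^ (r + 2) / fact (r + 2) * D r))"
      using Dnn lam by (intro summable_ereal_pos) auto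
    have DU: "ereal (D r) \<le> u_star (r + 2) n g" for r
      unfolding D_def w_def by (rule D_le_u[OF g_nonneg B])
    have u0: "0 \<le> u_star (r + 2) n g" for r
      using Dnn[of r] DU[of r] by (meson ereal_less_eq(5) order_trans)
    show "summable (\<lambda>r. ereal (lam ^ (r + 2) / fact (r + 2)) * u_star (r + 2) n g)"
      using lam u0 by (intro summable_ereal_pos) (auto intro!: ereal_0_le_mult)
    fix r
    show "ereal (lam ^ (r + 2) / fact (r + 2) * D r) \<le> ereal (lam ^ (r + 2) / fact (r + 2)) * u_star (r + 2) n g"
    proof -
      have "ereal (lam ^ (r + 2) / fact (r + 2) * D r) = ereal (lam ^ (r + 2) / fact (r + 2)) * ereal (D r)"
        by simp
      also have "\<dots> \<le> ereal (lam ^ (r + 2) / fact (r + 2)) * u_star (r + 2) n g"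
        using DU[of r] lam by (intro ereal_mult_left_mono) auto
      finally show ?thesis .
    qed
  qed
  finally show ?thesis by (simp add: w_def mult.commute)
qed

lemma infsum_split_finite:
  fixes f :: "'a \<Rightarrow> real"
  assumes "f summable_on A" "finite B" "B \<subseteq> A"
  shows "infsum f A = sum f B + infsum f (A - B)"
proof -
  have "A = B \<union> (A - B)" using assms by auto
  then have "infsum f A = infsum f (B \<union> (A - B))" by simp
  also have "\<dots> = infsum f B + infsum f (A - B)"
    using assms by (intro infsum_Un_disjoint) (auto intro: summable_on_subset)
  finally show ?thesis using assms by simp
qed

lemma pmf_integrable_bounded:
  fixes f :: "'b \<Rightarrow> real"
  assumes "\<And>x. \<bar>f x\<bar> \<le> C"
  shows "integrable (measure_pmf M) f"
  by (rule measure_pmf.integrable_const_bound[of _ C]) (auto simp: assms)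

lemma eps_le:
  fixes L V lam :: real
  assumes "lam > 0" "\<And>e. e > 0 \<Longrightarrow> L \<le> lam * e + V"
  shows "L \<le> V"
proof (rule ccontr)
  assume "\<not> L \<le> V"
  then have "(L - V) / (2 * lam) > 0" using assms by auto
  from assms(2)[OF this] have "L \<le> (L - V) / 2 + V" using assms(1) by simp
  then show False using \<open>\<not> L \<le> V\<close> by (simp add: field_simps)
qed


theorem lemma5:
  fixes P :: "'a pmf" and g :: "real \<Rightarrow> real" and n :: nat and lam :: real
  assumes g_nonneg: "\<forall>p\<in>{0..1}. g p \<ge> 0"
    and g_summable: "(\<lambda>x. g (pmf P x)) summable_on set_pmf P"
    and lam_pos: "lam > 0"
  shows "ereal (L_G0 g P n lam)
           \<le> (\<Sum>r. ereal (lam ^ (r + 2) / fact (r + 2)) * u_star (r + 2) n g)"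
proof -
  define M where "M = replicate_pmf n P"
  define gx where "gx x = g (pmf P x)" for x
  define S where "S = infsum gx (set_pmf P)"
  define I :: "'a \<Rightarrow> 'a list \<Rightarrow> real" where "I x xs = (if x \<in> set xs then 0 else 1)" for x xs
  define q where "q x = (1 - pmf P x) ^ n" for x
  define RHS where "RHS = (\<Sum>r. ereal (lam ^ (r + 2) / fact (r + 2)) * u_star (r + 2) n g)"
  have gx0: "gx x \<ge> 0" for x unfolding gx_def using g_nonneg by (simp add: pmf_le_1)
  have gsum: "gx summable_on set_pmf P" using g_summable unfolding gx_def .
  have I01: "I x xs = 0 \<or> I x xs = 1" for x xs unfolding I_def by auto
  have Isum: "(\<lambda>x. gx x * I x xs) summable_on set_pmf P" for xs
    by (rule summable_on_comparison_test[OF gsum]) (auto simp: I_def gx0)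
  have G0eq: "G0 g P xs = infsum (\<lambda>x. gx x * I x xs) (set_pmf P)" for xs
    unfolding G0_def gx_def I_def occ_def by (intro infsum_cong) (simp add: count_list_0_iff)
  have G0nn: "G0 g P xs \<ge> 0" for xs
    unfolding G0eq by (rule infsum_nonneg) (auto simp: I_def gx0)
  have G0S: "G0 g P xs \<le> S" for xs
    unfolding G0eq S_def by (rule infsum_mono[OF Isum gsum]) (auto simp: I_def gx0)
  have split: "G0 g P xs \<le> (\<Sum>x\<in>B. gx x * I x xs) + (S - sum gx B)"
        "(\<Sum>x\<in>B. gx x * I x xs) \<le> G0 g P xs"
    if B: "finite B" "B \<subseteq> set_pmf P" for B xs
  proof -
    have e1: "G0 g P xs = (\<Sum>x\<in>B. gx x * I x xs) + infsum (\<lambda>x. gx x * I x xs) (set_pmf P - B)"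
      unfolding G0eq by (rule infsum_split_finite[OF Isum B])
    have e2: "S = sum gx B + infsum gx (set_pmf P - B)"
      unfolding S_def by (rule infsum_split_finite[OF gsum B])
    have "infsum (\<lambda>x. gx x * I x xs) (set_pmf P - B) \<le> infsum gx (set_pmf P - B)"
      by (rule infsum_mono[OF summable_on_subset[OF Isum] summable_on_subset[OF gsum]]) (auto simp: I_def gx0)
    then show "G0 g P xs \<le> (\<Sum>x\<in>B. gx x * I x xs) + (S - sum gx B)" using e1 e2 by simp
    have "infsum (\<lambda>x. gx x * I x xs) (set_pmf P - B) \<ge> 0"
      by (rule infsum_nonneg) (auto simp: I_def gx0)
    then show "(\<Sum>x\<in>B. gx x * I x xs) \<le> G0 g P xs" using e1 by simp
  qed
  have S0: "S \<ge> 0" unfolding S_def by (rule infsum_nonneg) (auto simp: gx0)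
  define E1 where "E1 = measure_pmf.expectation M (\<lambda>xs. exp (lam * G0 g P xs))"
  define EG where "EG = measure_pmf.expectation M (G0 g P)"
  have int_exp: "integrable (measure_pmf M) (\<lambda>xs. exp (lam * G0 g P xs))"
    by (rule pmf_integrable_bounded[of _ "exp (lam * S)"]) (use lam_pos G0S in auto)
  have int_G0: "integrable (measure_pmf M) (G0 g P)"
    by (rule pmf_integrable_bounded[of _ S]) (use G0S G0nn in \<open>auto simp: abs_le_iff intro: order_trans\<close>)
  have E1ge: "E1 \<ge> 1"
  proof -
    have "measure_pmf.expectation M (\<lambda>xs. 1::real) \<le> E1"
      unfolding E1_def by (rule integral_mono[OF _ int_exp]) (use lam_pos G0nn in auto)
    then show ?thesis by simp
  qed
  have Leq: "L_G0 g P n lam = ln E1 - lam * EG"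
  proof -
    have "L_G0 g P n lam = ln (measure_pmf.expectation M (\<lambda>xs. exp (lam * G0 g P xs) * exp (- (lam * EG))))"
      unfolding L_G0_def M_def[symmetric] EG_def[symmetric]
      by (simp add: right_diff_distrib exp_diff exp_minus field_simps)
    also have "\<dots> = ln (E1 * exp (- (lam * EG)))" unfolding E1_def by simp
    also have "\<dots> = ln E1 - lam * EG" using E1ge by (simp add: ln_mult)
    finally show ?thesis .
  qed
  have EI: "measure_pmf.expectation M (I x) = q x" for x
  proof -
    have "I x = indicator {xs. set xs \<inter> {x} = {}}" by (auto simp: I_def indicator_def)
    then have "measure_pmf.expectation M (I x) = measure_pmf.prob M {xs. set xs \<inter> {x} = {}}" by simp
    also have "\<dots> = q x" unfolding M_def q_def using rep_prob[of n P "{x}"] by (simp add: measure_pmf_single)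
    finally show ?thesis .
  qed
  have q01: "0 \<le> q x" "q x \<le> 1" for x unfolding q_def by (auto simp: pmf_le_1 power_le_one)
  have mainB: "ereal (L_G0 g P n lam) \<le> ereal (lam * (S - sum gx B)) + RHS"
    if B: "finite B" "B \<subseteq> set_pmf P" for B
  proof -
    define a where "a x = exp (lam * gx x) - 1" for x
    have a0: "a x \<ge> 0" for x unfolding a_def using lam_pos gx0[of x] by simp
    have pw: "exp (lam * G0 g P xs) \<le> exp (lam * (S - sum gx B)) * (\<Prod>x\<in>B. a x * I x xs + 1)" for xs
    proof -
      have "exp (lam * G0 g P xs) \<le> exp (lam * ((\<Sum>x\<in>B. gx x * I x xs) + (S - sum gx B)))"
        using split(1)[OF B, of xs] lam_pos by simp
      also have "\<dots> = exp (lam * (S - sum gx B)) * exp (\<Sum>x\<in>B. lam * (gx x * I x xs))"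
        by (simp add: distrib_left exp_add sum_distrib_left mult.commute)
      also have "exp (\<Sum>x\<in>B. lam * (gx x * I x xs)) = (\<Prod>x\<in>B. a x * I x xs + 1)"
        unfolding exp_sum[OF B(1)] a_def
        by (intro prod.cong refl) (simp add: I_def)
      finally show ?thesis by simp
    qed
    have E1le: "E1 \<le> exp (lam * (S - sum gx B)) * (\<Prod>x\<in>B. a x * q x + 1)"
    proof -
      have "E1 \<le> measure_pmf.expectation M (\<lambda>xs. exp (lam * (S - sum gx B)) * (\<Prod>x\<in>B. a x * I x xs + 1))"
        unfolding E1_def
      proof (rule integral_mono[OF int_exp])
        show "integrable (measure_pmf M) (\<lambda>xs. exp (lam * (S - sum gx B)) * (\<Prod>x\<in>B. a x * I x xs + 1))"
        proof (rule pmf_integrable_bounded[of _ "exp (lam * (S - sum gx B)) * (\<Prod>x\<in>B. a x + 1)"])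
          fix xs
          have "\<bar>\<Prod>x\<in>B. a x * I x xs + 1\<bar> \<le> (\<Prod>x\<in>B. a x + 1)"
            unfolding abs_prod
            by (intro prod_mono) (use a0 in \<open>auto simp: abs_le_iff I_def\<close>)
          then show "\<bar>exp (lam * (S - sum gx B)) * (\<Prod>x\<in>B. a x * I x xs + 1)\<bar> \<le> exp (lam * (S - sum gx B)) * (\<Prod>x\<in>B. a x + 1)"
            by (simp add: abs_mult)
        qed
      qed (rule pw)
      also have "\<dots> = exp (lam * (S - sum gx B)) * measure_pmf.expectation M (\<lambda>xs. \<Prod>x\<in>B. a x * I x xs + 1)"
        by simp
      also have "\<dots> \<le> exp (lam * (S - sum gx B)) * (\<Prod>x\<in>B. a x * q x + 1)"
        unfolding M_def I_def q_def by (intro mult_left_mono key[OF B(1)]) (use a0 in auto)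
      finally show ?thesis .
    qed
    have EGge: "(\<Sum>x\<in>B. gx x * q x) \<le> EG"
    proof -
      have "(\<Sum>x\<in>B. gx x * q x) = measure_pmf.expectation M (\<lambda>xs. \<Sum>x\<in>B. gx x * I x xs)"
      proof -
        have "measure_pmf.expectation M (\<lambda>xs. \<Sum>x\<in>B. gx x * I x xs) = (\<Sum>x\<in>B. measure_pmf.expectation M (\<lambda>xs. gx x * I x xs))"
          by (rule Bochner_Integration.integral_sum) (auto intro!: pmf_integrable_bounded[of _ 1] simp: I_def)
        also have "\<dots> = (\<Sum>x\<in>B. gx x * q x)" by (simp add: EI)
        finally show ?thesis by simp
      qed
      also have "\<dots> \<le> EG" unfolding EG_def
      proof (rule integral_mono[OF _ int_G0])
        show "integrable (measure_pmf M) (\<lambda>xs. \<Sum>x\<in>B. gx x * I x xs)"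
        proof (rule pmf_integrable_bounded[of _ "sum gx B"])
          fix xs
          have "\<bar>\<Sum>x\<in>B. gx x * I x xs\<bar> \<le> (\<Sum>x\<in>B. \<bar>gx x * I x xs\<bar>)" by (rule sum_abs)
          also have "\<dots> \<le> sum gx B" by (intro sum_mono) (auto simp: I_def gx0)
          finally show "\<bar>\<Sum>x\<in>B. gx x * I x xs\<bar> \<le> sum gx B" .
        qed
      qed (use split(2)[OF B] in auto)
      finally show ?thesis .
    qed
    define w where "w x = q x * (1 - q x)" for x
    have lnE1: "ln E1 \<le> lam * (S - sum gx B) + (\<Sum>x\<in>B. lam * gx x * q x + w x * (exp (lam * gx x) - 1 - lam * gx x))"
    proof -
      have pos: "a x * q x + 1 > 0" for x using a0[of x] q01[of x] by (smt (verit) mult_nonneg_nonneg)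
      have "ln E1 \<le> ln (exp (lam * (S - sum gx B)) * (\<Prod>x\<in>B. a x * q x + 1))"
        using E1le E1ge by (subst ln_le_cancel_iff) auto
      also have "\<dots> = lam * (S - sum gx B) + (\<Sum>x\<in>B. ln (a x * q x + 1))"
        using pos by (simp add: ln_mult prod_pos ln_prod[OF B(1)] less_imp_neq[symmetric])
      also have "\<dots> \<le> lam * (S - sum gx B) + (\<Sum>x\<in>B. lam * gx x * q x + w x * (exp (lam * gx x) - 1 - lam * gx x))"
        unfolding a_def w_def
        by (intro add_left_mono sum_mono)
           (use bern_ineq[of "lam * gx _" "q _"] lam_pos gx0 q01 in \<open>auto simp: mult.assoc\<close>)
      finally show ?thesis .
    qed
    have "L_G0 g P n lam \<le> lam * (S - sum gx B) + (\<Sum>x\<in>B. w x * (exp (lam * gx x) - 1 - lam * gx x))"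
    proof -
      have "lam * (\<Sum>x\<in>B. gx x * q x) \<le> lam * EG" using EGge lam_pos by simp
      then show ?thesis using lnE1 unfolding Leq
        by (simp add: sum.distrib sum_distrib_left mult.assoc)
    qed
    then have "ereal (L_G0 g P n lam) \<le> ereal (lam * (S - sum gx B)) + ereal (\<Sum>x\<in>B. w x * (exp (lam * gx x) - 1 - lam * gx x))"
      by simp
    also have "\<dots> \<le> ereal (lam * (S - sum gx B)) + RHS"
      unfolding RHS_def w_def q_def gx_def
      by (intro add_left_mono series_bound[OF g_nonneg B lam_pos])
    finally show ?thesis .
  qed
  have all_eps: "ereal (L_G0 g P n lam) \<le> ereal (lam * e) + RHS" if e: "e > 0" for e
  proof -
    obtain B where B: "finite B" "B \<subseteq> set_pmf P" "dist (sum gx B) S \<le> e"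
      using infsum_finite_approximation[OF gsum e] unfolding S_def by blast
    have "S - sum gx B \<le> e" using B(3) by (simp add: dist_real_def abs_le_iff)
    then have "ereal (lam * (S - sum gx B)) \<le> ereal (lam * e)" using lam_pos by simp
    then show ?thesis using mainB[OF B(1,2)] by (meson add_right_mono order_trans)
  qed
  show ?thesis
  proof (cases RHS)
    case (real V)
    have "L_G0 g P n lam \<le> V"
    proof (rule eps_le[OF lam_pos])
      fix e :: real assume "e > 0"
      from all_eps[OF this] show "L_G0 g P n lam \<le> lam * e + V" using real by simp
    qed
    then show ?thesis using real unfolding RHS_def by simp
  next
    case PInf then show ?thesis unfolding RHS_def by simp
  next
    case MInf
    with all_eps[of 1] show ?thesis by simp
  qed
qed
end
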